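(* Let $x,y,z$ be positive integers and let $p$ be a prime with $p\ge 3$ and $p\notin\{3,5\}$. If $\gcd(x,y)=1$ and $x^{p}+y^{p}=z^{p}$, then there exist positive integers $a,b,c$ such that $\gcd(a,b)=1$ and $a^{p}-4b^{p}=c^{2}$. *)

theory Defs
  imports "HOL-Computational_Algebra.Primes"
begin

end

theory Submission
  imports Defs
begin

theorem theorem1:
  fixes x y z p :: nat
  assumes "x > 0" "y > 0" "z > 0"
    and "prime p" "p \<ge> 3" "p \<notin> {3, 5}"
    and "gcd x y = 1"
    and "x ^ p + y ^ p = z ^ p"
  shows "\<exists>a b c :: int. a > 0 \<and> b > 0 \<and> c > 0 \<and> gcd a b = 1 \<and>
           a ^ p - 4 * b ^ p = c ^ 2"
proof -
  have p0: "p > 0" using assms(5) by simp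
  have cxy: "coprime (x^p) (y^p)" using assms(7) by (simp add: coprime_iff_gcd_eq_1)
  have "coprime (x^p) (x^p + y^p)" using cxy by (simp add: coprime_iff_gcd_eq_1 gcd_add2 del: coprime_power_left_iff coprime_power_right_iff)
  hence "coprime (x^p) (z^p)" using assms(8) by simp
  hence cxz: "coprime x z" using p0 by simp
  have g: "gcd (x^p) (y^p) = 1" using cxy by (simp only: coprime_iff_gcd_eq_1)
  have "gcd (y^p) (x^p + y^p) = 1" by (metis g gcd.commute gcd_add1)
  hence "coprime (y^p) (x^p + y^p)" by (simp only: coprime_iff_gcd_eq_1)
  hence "coprime (y^p) (z^p)" using assms(8) by simp
  hence cyz: "coprime y z" using p0 by simp
  have cz: "coprime (z^2) (x*y)" using cxz cyz
    by (simp add: coprime_commute)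
  have neq: "x \<noteq> y"
  proof
    assume "x = y"
    hence x1: "x = 1" using assms(7) by simp
    hence zp: "z ^ p = 2" using assms(8) \<open>x = y\<close> by simp
    show False
    proof (cases "z = 1")
      case True thus False using zp by simp
    next
      case False
      hence "z \<ge> 2" using assms(3) by simp
      hence "2 ^ p \<le> z ^ p" by (simp add: power_mono)
      moreover have "(2::nat) ^ 3 \<le> 2 ^ p" using assms(5) by (rule power_increasing) simp
      ultimately show False using zp by simp
    qed
  qed
  hence "x ^ p \<noteq> y ^ p" using p0 by (simp add: power_eq_iff_eq_base)
  hence ne: "int x ^ p \<noteq> int y ^ p" by (metis of_nat_eq_iff of_nat_power)
  have zi: "int z ^ p = int x ^ p + int y ^ p" using assms(8) by (metis of_nat_add of_nat_power)
  show ?thesis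
  proof (intro exI conjI)
    show "int (z^2) > 0" using assms(3) by simp
    show "int (x*y) > 0" using assms(1,2) by simp
    show "\<bar>int x ^ p - int y ^ p\<bar> > 0" using ne by simp
    show "gcd (int (z^2)) (int (x*y)) = 1" using cz
      by (metis coprime_iff_gcd_eq_1 gcd_int_int_eq of_nat_1)
    have "int (z^2) ^ p - 4 * int (x*y) ^ p = (int z ^ p)^2 - 4 * int x ^ p * int y ^ p"
      by (simp add: power_mult[symmetric] mult.commute power_mult_distrib)
    also have "\<dots> = (int x ^ p - int y ^ p)^2" unfolding zi by (simp add: power2_eq_square algebra_simps)
    finally show "int (z^2) ^ p - 4 * int (x*y) ^ p = \<bar>int x ^ p - int y ^ p\<bar>^2" by simp
  qed
qed

end
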